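(* Let $\Gamma$ be a numerical semigroup with multiplicity $e$ and conductor $c$, let $r>0$ be an integer and $m\in\Gamma$. Let $S_r(m)=\{(m_1,\dots,m_r)\in\Gamma^r: m\le m_1<\cdots<m_r\}$. Set $u=\max\{m+e-1,c+e-1\}$ and define finite sets $F_k(m)\subseteq S_k(m)$ recursively by $F_1(m)=\{m,m+1,\dots,u\}\cap\Gamma$ and, for $k\ge2$, \[ F_k(m)=\{(m_1,\dots,m_k): (m_1,\dots,m_{k-1})\in F_{k-1}(m),\ m_k\in X(m;m_1,\dots,m_{k-1})\}, \] where \[ X(m;m_1,\dots,m_{k-1})=\Big(\big(\{m_{k-1}+1,\dots,u\}\cap\Gamma\big)\cup\{m_1+e,\dots,m_{k-1}+e\}\Big)\setminus\{0,1,\dots,m_{k-1}\}. \] Then \[ \min\{|D_\Gamma(x_1,\dots,x_r)| : (x_1,\dots,x_r)\in F_r(m)\}=\min\{|D_\Gamma(p_1,\dots,p_r)|:(p_1,\dots,p_r)\in S_r(m)\}. \] In particular the right-hand side, which is the $r$-th Feng-Rao distance $\delta^r_\Gamma(m)$, is a minimum over a finite, recursively constructible set.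
   Context: A numerical semigroup is a subset $\Gamma\subseteq\mathbb N$ containing $0$, closed under addition, with finite complement; multiplicity = least positive element; conductor = least $c$ with $c+\mathbb N\subseteq\Gamma$. For $x\in\mathbb Z$, $D_\Gamma(x)=\{s\in\Gamma:x-s\in\Gamma\}$ and $D_\Gamma(x_1,\dots,x_r)=D_\Gamma(x_1)\cup\cdots\cup D_\Gamma(x_r)$. The $r$-th Feng-Rao distance is $\delta^r_\Gamma(m)=\min\{|D_\Gamma(m_1,\dots,m_r)|: m\le m_1<\cdots<m_r,\ m_i\in\Gamma\}$. *)

theory Defs
  imports Main
begin

definition numerical_semigroup :: "nat set \<Rightarrow> bool" where
  "numerical_semigroup G \<longleftrightarrow> 0 \<in> G \<and> (\<forall>a\<in>G. \<forall>b\<in>G. a + b \<in> G) \<and> finite (UNIV - G)"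

definition multiplicity_ns :: "nat set \<Rightarrow> nat" where
  "multiplicity_ns G = (LEAST x. 0 < x \<and> x \<in> G)"

definition conductor_ns :: "nat set \<Rightarrow> nat" where
  "conductor_ns G = (LEAST c. \<forall>n. c \<le> n \<longrightarrow> n \<in> G)"

text \<open>D_Gamma(x) = {s in Gamma. x - s in Gamma} (integer subtraction; for s > x the
  difference is negative hence not in Gamma, so we require s \<le> x).\<close>
definition Dset :: "nat set \<Rightarrow> nat \<Rightarrow> nat set" where
  "Dset G x = {s \<in> G. s \<le> x \<and> x - s \<in> G}"

definition Dlist :: "nat set \<Rightarrow> nat list \<Rightarrow> nat set" where
  "Dlist G xs = (\<Union>x\<in>set xs. Dset G x)"

definition S_tuples :: "nat set \<Rightarrow> nat \<Rightarrow> nat \<Rightarrow> nat list set" where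
  "S_tuples G r m = {xs. length xs = r \<and> set xs \<subseteq> G \<and> sorted_wrt (<) xs \<and> (\<forall>x\<in>set xs. m \<le> x)}"

definition feng_rao :: "nat set \<Rightarrow> nat \<Rightarrow> nat \<Rightarrow> nat" where
  "feng_rao G r m = Inf ((\<lambda>xs. card (Dlist G xs)) ` S_tuples G r m)"

definition u_bound :: "nat set \<Rightarrow> nat \<Rightarrow> nat" where
  "u_bound G m = max (m + multiplicity_ns G - 1) (conductor_ns G + multiplicity_ns G - 1)"

definition X_set :: "nat set \<Rightarrow> nat \<Rightarrow> nat list \<Rightarrow> nat set" where
  "X_set G m xs =
     (({last xs + 1 .. u_bound G m} \<inter> G) \<union> (\<lambda>a. a + multiplicity_ns G) ` set xs) - {0 .. last xs}"

primrec F_tuples :: "nat set \<Rightarrow> nat \<Rightarrow> nat \<Rightarrow> nat list set" where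
  "F_tuples G m 0 = {[]}"
| "F_tuples G m (Suc k) =
     (if k = 0 then {[a] | a. a \<in> {m .. u_bound G m} \<inter> G}
      else {xs @ [y] | xs y. xs \<in> F_tuples G m k \<and> y \<in> X_set G m xs})"

end

theory Submission
  imports Defs
begin

lemma e_props:
  assumes "numerical_semigroup G"
  shows "multiplicity_ns G \<in> G \<and> 0 < multiplicity_ns G"
proof -
  have fin: "finite (UNIV - G)" using assms by (simp add: numerical_semigroup_def)
  have "infinite G"
  proof
    assume "finite G"
    then have "finite (G \<union> (UNIV - G))" using fin by simp
    then show False by simp
  qed
  then have "infinite (G - {0})" by simp
  then have "G - {0} \<noteq> {}" by (metis finite.emptyI)
  then obtain x where "x \<in> G - {0}" by blast
  then have "0 < x \<and> x \<in> G" by simp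
  then show ?thesis unfolding multiplicity_ns_def by (metis (mono_tags, lifting) LeastI_ex)
qed

lemma c_props:
  assumes "numerical_semigroup G" "conductor_ns G \<le> n"
  shows "n \<in> G"
proof -
  have fin: "finite (UNIV - G)" using assms by (simp add: numerical_semigroup_def)
  then obtain k where "\<forall>n\<in>UNIV - G. n < k" using finite_nat_set_iff_bounded by blast
  then have ex: "\<forall>n. k \<le> n \<longrightarrow> n \<in> G" by (meson DiffI UNIV_I leD)
  have "\<forall>n. conductor_ns G \<le> n \<longrightarrow> n \<in> G"
    unfolding conductor_ns_def using LeastI_ex[of "\<lambda>c. \<forall>n. c \<le> n \<longrightarrow> n \<in> G"] ex by blast
  then show ?thesis using assms(2) by blast
qed

lemma sorted_le_last:
  assumes "sorted_wrt (<) (xs::nat list)" "x \<in> set xs"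
  shows "x \<le> last xs"
proof -
  have ne: "xs \<noteq> []" using assms by auto
  have "xs = butlast xs @ [last xs]" using ne by simp
  then have "sorted_wrt (<) (butlast xs @ [last xs])" using assms by simp
  then have "\<forall>y\<in>set (butlast xs). y < last xs" by (simp add: sorted_wrt_append)
  moreover have "x \<in> set (butlast xs) \<or> x = last xs"
    using assms(2) \<open>xs = butlast xs @ [last xs]\<close> by (metis butlast_snoc in_set_butlast_appendI last_snoc append_butlast_last_id ne rotate1.simps(2) set_rotate1 set_ConsD)
  ultimately show ?thesis by auto
qed

lemma Dset_mono_e:
  assumes "numerical_semigroup G" "e \<in> G" "e \<le> y"
  shows "Dset G (y - e) \<subseteq> Dset G y"
proof
  fix s assume "s \<in> Dset G (y - e)"
  then have s: "s \<in> G" "s \<le> y - e" "y - e - s \<in> G" by (auto simp: Dset_def)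
  have "y - s = (y - e - s) + e" using s(2) assms(3) by simp
  then have "y - s \<in> G" using s(3) assms(1,2) by (simp add: numerical_semigroup_def)
  then show "s \<in> Dset G y" using s by (auto simp: Dset_def)
qed

lemma finite_Dlist: "finite (Dlist G xs)"
proof -
  have "\<And>x. Dset G x \<subseteq> {0..x}" by (auto simp: Dset_def)
  then have "\<And>x. finite (Dset G x)" by (meson finite_atLeastAtMost finite_subset)
  then show ?thesis by (simp add: Dlist_def)
qed

lemma F_sub_S:
  assumes "numerical_semigroup G"
  shows "F_tuples G m (Suc k) \<subseteq> S_tuples G (Suc k) m"
proof (induction k)
  case 0
  then show ?case by (auto simp: S_tuples_def)
next
  case (Suc k)
  have eG: "multiplicity_ns G \<in> G" using e_props[OF assms] by blast
  show ?case
  proof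
    fix zs assume "zs \<in> F_tuples G m (Suc (Suc k))"
    then obtain xs y where zs: "zs = xs @ [y]" and xs: "xs \<in> F_tuples G m (Suc k)"
      and y: "y \<in> X_set G m xs" by auto
    have xsS: "xs \<in> S_tuples G (Suc k) m" using xs Suc by blast
    then have ne: "xs \<noteq> []" by (auto simp: S_tuples_def)
    have ylast: "last xs < y" using y by (auto simp: X_set_def)
    have yG: "y \<in> G"
    proof -
      have "y \<in> G \<or> (\<exists>a\<in>set xs. y = a + multiplicity_ns G)" using y by (auto simp: X_set_def)
      moreover have "set xs \<subseteq> G" using xsS by (simp add: S_tuples_def)
      ultimately show ?thesis using eG assms by (auto simp: numerical_semigroup_def)
    qed
    have all: "\<forall>x\<in>set xs. x < y"
      using sorted_le_last[of xs] xsS ylast by (force simp: S_tuples_def)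
    have "m \<le> last xs" using xsS ne by (simp add: S_tuples_def)
    then show "zs \<in> S_tuples G (Suc (Suc k)) m"
      using xsS zs yG all ylast by (auto simp: S_tuples_def sorted_wrt_append)
  qed
qed

lemma F_finite_ne:
  assumes "numerical_semigroup G" "m \<in> G"
  shows "finite (F_tuples G m (Suc k)) \<and> F_tuples G m (Suc k) \<noteq> {}"
proof (induction k)
  case 0
  have "m \<le> u_bound G m" using e_props[OF assms(1)] unfolding u_bound_def by linarith
  moreover have "{[a] | a. a \<in> {m .. u_bound G m} \<inter> G} = (\<lambda>a. [a]) ` ({m .. u_bound G m} \<inter> G)"
    by auto
  ultimately show ?case using F_tuples.simps assms(2) by auto
next
  case (Suc k)
  have eq: "F_tuples G m (Suc (Suc k)) = (\<lambda>(xs,y). xs @ [y]) ` (SIGMA xs:F_tuples G m (Suc k). X_set G m xs)"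
    by auto
  have finX: "\<And>xs. finite (X_set G m xs)" unfolding X_set_def by auto
  have fin: "finite (F_tuples G m (Suc (Suc k)))" using eq Suc finX by simp
  obtain xs where xs: "xs \<in> F_tuples G m (Suc k)" using Suc by blast
  have "xs \<noteq> []" using F_sub_S[OF assms(1)] xs by (force simp: S_tuples_def)
  have "last xs + multiplicity_ns G \<in> X_set G m xs"
    using e_props[OF assms(1)] \<open>xs \<noteq> []\<close> by (auto simp: X_set_def)
  then have "xs @ [last xs + multiplicity_ns G] \<in> F_tuples G m (Suc (Suc k))" using xs by auto
  then show ?case using fin by blast
qed

definition closed_e :: "nat set \<Rightarrow> nat \<Rightarrow> nat list \<Rightarrow> bool" where
  "closed_e G m xs \<longleftrightarrow> (\<forall>y\<in>set xs. u_bound G m < y \<longrightarrow> y - multiplicity_ns G \<in> set xs)"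

lemma closed_in_F:
  assumes "numerical_semigroup G"
  shows "\<forall>xs. xs \<in> S_tuples G (Suc k) m \<and> closed_e G m xs \<longrightarrow> xs \<in> F_tuples G m (Suc k)"
proof (induction k)
  case 0
  have e: "0 < multiplicity_ns G" using e_props[OF assms] by blast
  show ?case
  proof (intro allI impI)
    fix xs assume a: "xs \<in> S_tuples G (Suc 0) m \<and> closed_e G m xs"
    then obtain x where x: "xs = [x]" by (auto simp: S_tuples_def length_Suc_conv)
    have "x \<le> u_bound G m"
    proof (rule ccontr)
      assume "\<not> x \<le> u_bound G m"
      then have "x - multiplicity_ns G = x" using a x by (auto simp: closed_e_def)
      moreover have "x > 0" using \<open>\<not> x \<le> u_bound G m\<close> by simp
      ultimately show False using e by simp
    qed
    then show "xs \<in> F_tuples G m (Suc 0)" using a x by (auto simp: S_tuples_def)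
  qed
next
  case (Suc k)
  define e where "e = multiplicity_ns G"
  have e: "0 < e" "e \<in> G" using e_props[OF assms] e_def by auto
  show ?case
  proof (intro allI impI)
    fix xs assume a: "xs \<in> S_tuples G (Suc (Suc k)) m \<and> closed_e G m xs"
    define ys where "ys = butlast xs"
    define y where "y = last xs"
    have ne: "xs \<noteq> []" using a by (auto simp: S_tuples_def)
    have xs: "xs = ys @ [y]" using ne ys_def y_def by simp
    have S: "length xs = Suc (Suc k)" "set xs \<subseteq> G" "sorted_wrt (<) xs" "\<forall>x\<in>set xs. m \<le> x"
      using a by (auto simp: S_tuples_def)
    have lt: "\<forall>z\<in>set ys. z < y" using S(3) xs by (metis sorted_wrt_append list.set_intros(1))
    have ysS: "ys \<in> S_tuples G (Suc k) m"
      using S xs by (auto simp: S_tuples_def sorted_wrt_append)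
    have cl: "\<And>z. z \<in> set xs \<Longrightarrow> u_bound G m < z \<Longrightarrow> z - e \<in> set xs"
      using a by (auto simp: closed_e_def e_def)
    have ysC: "closed_e G m ys"
      unfolding closed_e_def e_def[symmetric]
    proof (intro ballI impI)
      fix z assume z: "z \<in> set ys" "u_bound G m < z"
      then have "z - e \<in> set xs" using cl xs by auto
      moreover have "z - e \<noteq> y" using lt z by auto
      ultimately show "z - e \<in> set ys" using xs by auto
    qed
    have ysF: "ys \<in> F_tuples G m (Suc k)" using Suc ysS ysC by blast
    have yne: "ys \<noteq> []" using ysS by (auto simp: S_tuples_def)
    have lasty: "last ys < y" using lt yne by simp
    have yG: "y \<in> G" using S xs by auto
    have "y \<in> X_set G m ys"
    proof (cases "y \<le> u_bound G m")
      case True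
      then show ?thesis using lasty yG by (auto simp: X_set_def)
    next
      case False
      then have ge: "e \<le> y" unfolding u_bound_def e_def by auto
      have "y - e \<in> set xs" using cl False xs by auto
      moreover have "y - e \<noteq> y" using e ge False by auto
      ultimately have "y - e \<in> set ys" using xs by auto
      moreover have "y = (y - e) + e" using ge by simp
      ultimately have "y \<in> (\<lambda>a. a + e) ` set ys" by blast
      then show ?thesis using lasty by (auto simp: X_set_def e_def)
    qed
    then show "xs \<in> F_tuples G m (Suc (Suc k))" using ysF xs by auto
  qed
qed

lemma reduce_to_closed:
  assumes "numerical_semigroup G" "p \<in> S_tuples G r m" "m \<in> G"
  shows "\<exists>q. q \<in> S_tuples G r m \<and> closed_e G m q \<and> card (Dlist G q) \<le> card (Dlist G p)"
proof -
  define e where "e = multiplicity_ns G"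
  have e: "0 < e" "e \<in> G" using e_props[OF assms(1)] e_def by auto
  let ?T = "\<lambda>q. q \<in> S_tuples G r m \<and> Dlist G q \<subseteq> Dlist G p"
  obtain q where q: "?T q" and qmin: "\<forall>q'. ?T q' \<longrightarrow> sum id (set q) \<le> sum id (set q')"
    using ex_has_least_nat[of ?T p "\<lambda>q. sum id (set q)"] assms(2) by blast
  have "closed_e G m q"
    unfolding closed_e_def e_def[symmetric]
  proof (rule ccontr)
    assume "\<not> (\<forall>y\<in>set q. u_bound G m < y \<longrightarrow> y - e \<in> set q)"
    then obtain y where y: "y \<in> set q" "u_bound G m < y" "y - e \<notin> set q" by blast
    have qS: "length q = r" "set q \<subseteq> G" "sorted_wrt (<) q" "\<forall>x\<in>set q. m \<le> x"
      using q by (auto simp: S_tuples_def)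
    have ge1: "m + e \<le> y" "conductor_ns G + e \<le> y"
      using y(2) e unfolding u_bound_def e_def by auto
    have yeG: "y - e \<in> G" using c_props[OF assms(1)] ge1 by auto
    define A where "A = insert (y - e) (set q - {y})"
    define q' where "q' = sorted_list_of_set A"
    have finA: "finite A" by (simp add: A_def)
    have dq: "distinct q" using qS(3) by (simp add: strict_sorted_iff)
    have cardA: "card A = r"
    proof -
      have "card (set q - {y}) = r - 1" using dq qS(1) y(1) by (simp add: distinct_card)
      moreover have "r \<ge> 1" using y(1) qS(1) by (cases q) auto
      ultimately show ?thesis unfolding A_def using y(3) by simp
    qed
    have setq': "set q' = A" using finA by (simp add: q'_def)
    have srt: "sorted_wrt (<) q'" unfolding q'_def using strict_sorted_list_of_set by blast
    have lenq': "length q' = r" using cardA by (simp add: q'_def)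
    have AG: "A \<subseteq> G" unfolding A_def using qS(2) yeG by blast
    have Am: "\<forall>x\<in>A. m \<le> x" unfolding A_def using qS(4) ge1(1) by force
    have q'S: "q' \<in> S_tuples G r m"
      unfolding S_tuples_def mem_Collect_eq using lenq' srt AG Am setq' by simp
    have "Dlist G q' \<subseteq> Dlist G q"
    proof -
      have "Dset G (y - e) \<subseteq> Dset G y" using Dset_mono_e[OF assms(1) e(2)] ge1 by simp
      have "\<And>x. x \<in> set q' \<Longrightarrow> Dset G x \<subseteq> Dlist G q"
      proof -
        fix x assume "x \<in> set q'"
        then have "x = y - e \<or> x \<in> set q" using setq' unfolding A_def by blast
        moreover have "\<And>z. z \<in> set q \<Longrightarrow> Dset G z \<subseteq> Dlist G q"
          unfolding Dlist_def by blast
        ultimately show "Dset G x \<subseteq> Dlist G q"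
          using \<open>Dset G (y - e) \<subseteq> Dset G y\<close> y(1) by blast
      qed
      then show ?thesis unfolding Dlist_def[of G q'] by blast
    qed
    then have T': "?T q'" using q q'S by blast
    have "sum id A = sum id (set q - {y}) + (y - e)"
      using y(3) unfolding A_def by simp
    moreover have "sum id (set q) = sum id (set q - {y}) + y"
      using y(1) by (simp add: sum.remove)
    ultimately have "sum id (set q') < sum id (set q)" using setq' e ge1 by simp
    then show False using qmin T' by fastforce
  qed
  moreover have "card (Dlist G q) \<le> card (Dlist G p)" using q finite_Dlist by (meson card_mono)
  ultimately show ?thesis using q by blast
qed

theorem proposition6p1:
  fixes G :: "nat set" and r m :: nat
  assumes "numerical_semigroup G" and "0 < r" and "m \<in> G"
  shows "finite (F_tuples G m r) \<and> F_tuples G m r \<subseteq> S_tuples G r m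
         \<and> Min ((\<lambda>xs. card (Dlist G xs)) ` F_tuples G m r)
             = Inf ((\<lambda>xs. card (Dlist G xs)) ` S_tuples G r m)
         \<and> feng_rao G r m = Min ((\<lambda>xs. card (Dlist G xs)) ` F_tuples G m r)"
proof -
  obtain k where r: "r = Suc k" using assms(2) by (cases r) auto
  let ?f = "\<lambda>xs. card (Dlist G xs)"
  have fin: "finite (F_tuples G m r)" and ne: "F_tuples G m r \<noteq> {}"
    using F_finite_ne[OF assms(1,3)] r by auto
  have sub: "F_tuples G m r \<subseteq> S_tuples G r m" using F_sub_S[OF assms(1)] r by simp
  have "Inf (?f ` S_tuples G r m) = Min (?f ` F_tuples G m r)"
  proof (rule cInf_eq_minimum)
    show "Min (?f ` F_tuples G m r) \<in> ?f ` S_tuples G r m"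
      using Min_in[of "?f ` F_tuples G m r"] fin ne sub by blast
  next
    fix x assume "x \<in> ?f ` S_tuples G r m"
    then obtain p where p: "p \<in> S_tuples G r m" "x = ?f p" by blast
    then obtain q where q: "q \<in> S_tuples G r m" "closed_e G m q" "?f q \<le> ?f p"
      using reduce_to_closed[OF assms(1) p(1) assms(3)] by blast
    then have "q \<in> F_tuples G m r" using closed_in_F[OF assms(1)] r by blast
    then have "Min (?f ` F_tuples G m r) \<le> ?f q" using fin by simp
    then show "Min (?f ` F_tuples G m r) \<le> x" using q p by simp
  qed
  then show ?thesis using fin sub by (simp add: feng_rao_def)
qed

end
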